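(* Let $\mathcal{G}=(\mathcal{V},\mathcal{A})$ be the information-flow graph of a single-sender single-uniprior index-coding instance with message lengths $q_1,\dots,q_n$. Then \[ \ell^*(\mathcal{G}) \geq \sum_{k \in \mathcal{V}} q_k - \sum_{i \in \mathcal{L}(\mathcal{G})} q_i - \sum_{\mathcal{V}_{S} \in \mathbb{V}} \min_{a \in \mathcal{V}_{S}} q_a, \] where $\mathbb{V}$ is the set of vertex sets of all leaf SCCs of $\mathcal{G}$.
   Context: Single-sender single-uniprior index coding: there are $n$ receivers and $n$ independent messages $x_1,\dots,x_n$; message $x_i$ consists of $q_i\ge 1$ bits, each independently uniformly distributed on $\{0,1\}$. A single sender knows all messages. Receiver $i$ knows $x_i$ a priori and requests a set $\mathcal{W}_i$ of messages with $x_i\notin\mathcal{W}_i$. The information-flow graph is the directed graph $\mathcal{G}=(\mathcal{V},\mathcal{A})$ with $\mathcal{V}=\{1,\dots,n\}$ and an arc $(j\to i)\in\mathcal{A}$ iff $x_j\in\mathcal{W}_i$. An index code of length $\ell$ consists of an encoding function $E:\{0,1\}^{\sum_i q_i}\to\{0,1\}^\ell$ and, for each receiver $i$, a decoding function $D_i$ such that $D_i(E(x_1,\dots,x_n),x_i)$ equals the tuple of messages in $\mathcal{W}_i$ for all values of the messages. $\ell^*(\mathcal{G})$ denotes the minimum length of an index code. A leaf vertex is a vertex with no outgoing arcs; $\mathcal{L}(\mathcal{G})$ is the set of leaf vertices. A strongly connected component (SCC) is a maximal subgraph in which every ordered pair of vertices is joined by a directed path inside the subgraph. A leaf SCC is an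 SCC with at least two vertices from which no arc goes to a vertex outside the SCC. *)

theory Defs
  imports Main
begin

text \<open>Vertices are 1..n; an arc (j,i) in A means receiver i requests message x_j.
  A message assignment gives each message i in 1..n a bit string of length q i
  (and the empty list outside 1..n).\<close>

definition msgs :: "nat \<Rightarrow> (nat \<Rightarrow> nat) \<Rightarrow> (nat \<Rightarrow> bool list) set" where
  "msgs n q = {x. \<forall>i. (i \<in> {1..n} \<longrightarrow> length (x i) = q i) \<and> (i \<notin> {1..n} \<longrightarrow> x i = [])}"

definition is_index_code ::
  "nat \<Rightarrow> (nat \<Rightarrow> nat) \<Rightarrow> (nat \<times> nat) set \<Rightarrow> nat \<Rightarrow>
   ((nat \<Rightarrow> bool list) \<Rightarrow> bool list) \<Rightarrow>
   (nat \<Rightarrow> bool list \<Rightarrow> bool list \<Rightarrow> nat \<Rightarrow> bool list) \<Rightarrow> bool" where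
  "is_index_code n q A l E D \<longleftrightarrow>
     (\<forall>x \<in> msgs n q. length (E x) = l) \<and>
     (\<forall>x \<in> msgs n q. \<forall>i \<in> {1..n}. \<forall>j. (j, i) \<in> A \<longrightarrow> D i (E x) (x i) j = x j)"

definition opt_len :: "nat \<Rightarrow> (nat \<Rightarrow> nat) \<Rightarrow> (nat \<times> nat) set \<Rightarrow> nat" where
  "opt_len n q A = (LEAST l. \<exists>E D. is_index_code n q A l E D)"

definition leaf_vertices :: "nat \<Rightarrow> (nat \<times> nat) set \<Rightarrow> nat set" where
  "leaf_vertices n A = {i \<in> {1..n}. \<not> (\<exists>j. (i, j) \<in> A)}"

definition strongly_connected_in :: "(nat \<times> nat) set \<Rightarrow> nat set \<Rightarrow> bool" where
  "strongly_connected_in A S \<longleftrightarrow> (\<forall>u \<in> S. \<forall>v \<in> S. (u, v) \<in> (A \<inter> (S \<times> S))\<^sup>*)"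

definition is_scc :: "nat \<Rightarrow> (nat \<times> nat) set \<Rightarrow> nat set \<Rightarrow> bool" where
  "is_scc n A S \<longleftrightarrow> S \<noteq> {} \<and> S \<subseteq> {1..n} \<and> strongly_connected_in A S \<and>
     (\<forall>T. S \<subset> T \<and> T \<subseteq> {1..n} \<longrightarrow> \<not> strongly_connected_in A T)"

definition is_leaf_scc :: "nat \<Rightarrow> (nat \<times> nat) set \<Rightarrow> nat set \<Rightarrow> bool" where
  "is_leaf_scc n A S \<longleftrightarrow> is_scc n A S \<and> card S \<ge> 2 \<and>
     (\<forall>u v. u \<in> S \<and> (u, v) \<in> A \<longrightarrow> v \<in> S)"

end

theory Submission
  imports Defs "HOL-Library.FuncSet"
begin

lemma bool_lists_card: "card {xs :: bool list. length xs = k} = 2 ^ k"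
  and bool_lists_fin: "finite {xs :: bool list. length xs = k}"
proof -
  have e: "{xs :: bool list. length xs = k} = {xs. set xs \<subseteq> UNIV \<and> length xs = k}" by simp
  show "card {xs :: bool list. length xs = k} = 2 ^ k"
    unfolding e card_lists_length_eq[OF finite_UNIV] by (simp add: UNIV_bool numeral_2_eq_2)
  show "finite {xs :: bool list. length xs = k}"
    unfolding e by (rule finite_lists_length_eq) simp
qed

lemma card_PiE_lists:
  assumes "finite R"
  shows "card (PiE R (\<lambda>i. {xs :: bool list. length xs = q i})) = 2 ^ (\<Sum>i\<in>R. q i)"
    and "finite (PiE R (\<lambda>i. {xs :: bool list. length xs = q i}))"
  using assms by (simp_all add: card_PiE bool_lists_card bool_lists_fin finite_PiE power_sum)

lemma card_msgs: "card (msgs n q) = 2 ^ (\<Sum>k\<in>{1..n}. q k)" "finite (msgs n q)"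
proof -
  have bij: "bij_betw (\<lambda>x. restrict x {1..n}) (msgs n q) (PiE {1..n} (\<lambda>i. {xs :: bool list. length xs = q i}))"
  proof (rule bij_betw_imageI)
    show "inj_on (\<lambda>x. restrict x {1..n}) (msgs n q)"
    proof (rule inj_onI)
      fix x y assume xy: "x \<in> msgs n q" "y \<in> msgs n q" "restrict x {1..n} = restrict y {1..n}"
      show "x = y"
      proof
        fix i show "x i = y i"
          using xy unfolding msgs_def by (cases "i \<in> {1..n}") (auto dest: fun_cong[where x=i])
      qed
    qed
    show "(\<lambda>x. restrict x {1..n}) ` msgs n q = PiE {1..n} (\<lambda>i. {xs :: bool list. length xs = q i})"
    proof
      show "(\<lambda>x. restrict x {1..n}) ` msgs n q \<subseteq> PiE {1..n} (\<lambda>i. {xs :: bool list. length xs = q i})"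
        unfolding msgs_def by auto
      show "PiE {1..n} (\<lambda>i. {xs :: bool list. length xs = q i}) \<subseteq> (\<lambda>x. restrict x {1..n}) ` msgs n q"
      proof
        fix f assume f: "f \<in> PiE {1..n} (\<lambda>i. {xs :: bool list. length xs = q i})"
        define x where "x = (\<lambda>i. if i \<in> {1..n} then f i else [])"
        have "x \<in> msgs n q" using f unfolding msgs_def x_def by auto
        moreover have "restrict x {1..n} = f"
          using f unfolding x_def by (auto simp: restrict_def PiE_def extensional_def)
        ultimately show "f \<in> (\<lambda>x. restrict x {1..n}) ` msgs n q" by force
      qed
    qed
  qed
  show "card (msgs n q) = 2 ^ (\<Sum>k\<in>{1..n}. q k)"
    using bij_betw_same_card[OF bij] card_PiE_lists[of "{1..n}" q] by simp
  show "finite (msgs n q)"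
    using bij_betw_finite[OF bij] card_PiE_lists[of "{1..n}" q] by simp
qed

lemma recover:
  assumes code: "is_index_code n q A l E D"
    and Asub: "A \<subseteq> {1..n} \<times> {1..n}"
    and x: "x \<in> msgs n q" and y: "y \<in> msgs n q" and E: "E x = E y"
    and path: "(u, r) \<in> A\<^sup>*" and r: "x r = y r"
  shows "x u = y u"
  using path r
proof (induction rule: converse_rtrancl_induct)
  case base then show ?case by simp
next
  case (step u v)
  then have v: "v \<in> {1..n}" using Asub by auto
  have "x u = D v (E x) (x v) u" using code x v step(1) unfolding is_index_code_def by auto
  also have "\<dots> = D v (E y) (y v) u" using E step by simp
  also have "\<dots> = y u" using code y v step(1) unfolding is_index_code_def by auto
  finally show ?case .
qed

lemma code_bound:
  assumes code: "is_index_code n q A l E D"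
    and Asub: "A \<subseteq> {1..n} \<times> {1..n}"
    and Rsub: "R \<subseteq> {1..n}"
    and roots: "\<forall>u\<in>{1..n}. \<exists>r\<in>R. (u, r) \<in> A\<^sup>*"
  shows "(\<Sum>k\<in>{1..n}. q k) \<le> l + (\<Sum>r\<in>R. q r)"
proof -
  have finR: "finite R" using Rsub finite_subset by blast
  define g where "g x = (E x, restrict x R)" for x
  define T where "T = {cs :: bool list. length cs = l} \<times> PiE R (\<lambda>i. {xs :: bool list. length xs = q i})"
  have inj: "inj_on g (msgs n q)"
  proof (rule inj_onI)
    fix x y assume x: "x \<in> msgs n q" and y: "y \<in> msgs n q" and gxy: "g x = g y"
    then have E: "E x = E y" and rr: "restrict x R = restrict y R" unfolding g_def by auto
    show "x = y"
    proof
      fix u show "x u = y u"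
      proof (cases "u \<in> {1..n}")
        case True
        then obtain r where "r \<in> R" "(u, r) \<in> A\<^sup>*" using roots by blast
        moreover have "x r = y r" using rr \<open>r \<in> R\<close> by (metis restrict_apply')
        ultimately show ?thesis using recover[OF code Asub x y E] by blast
      next
        case False then show ?thesis using x y unfolding msgs_def by auto
      qed
    qed
  qed
  have img: "g ` msgs n q \<subseteq> T"
    using code Rsub unfolding g_def T_def is_index_code_def msgs_def by auto
  have finT: "finite T" unfolding T_def using card_PiE_lists(2)[OF finR] bool_lists_fin by simp
  have "card (msgs n q) \<le> card T" using card_inj_on_le[OF inj img finT] .
  also have "card T = 2 ^ l * 2 ^ (\<Sum>r\<in>R. q r)"
    unfolding T_def card_cartesian_product bool_lists_card card_PiE_lists(1)[OF finR] ..
  also have "\<dots> = (2::nat) ^ (l + (\<Sum>r\<in>R. q r))" by (simp add: power_add)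
  finally have "(2::nat) ^ (\<Sum>k\<in>{1..n}. q k) \<le> 2 ^ (l + (\<Sum>r\<in>R. q r))" using card_msgs by simp
  then show ?thesis by (rule power_le_imp_le_exp[rotated]) simp
qed

lemma concat_extract:
  assumes "\<forall>k\<in>set ks. length (x k) = q k" "p < length ks"
  shows "take (q (ks!p)) (drop (sum_list (map q (take p ks))) (concat (map x ks))) = x (ks!p)"
  using assms
proof (induction ks arbitrary: p)
  case Nil then show ?case by simp
next
  case (Cons k ks)
  show ?case
  proof (cases p)
    case 0 then show ?thesis using Cons by simp
  next
    case (Suc p')
    have "take (q ((k # ks) ! p)) (drop (sum_list (map q (take p (k # ks)))) (concat (map x (k # ks))))
       = take (q (ks ! p')) (drop (sum_list (map q (take p' ks))) (concat (map x ks)))"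
      using Cons.prems Suc by (simp add: add.commute)
    also have "\<dots> = x (ks ! p')" using Cons Suc by simp
    finally show ?thesis using Suc by simp
  qed
qed

lemma code_exists:
  assumes Asub: "A \<subseteq> {1..n} \<times> {1..n}"
  shows "\<exists>E D. is_index_code n q A (\<Sum>k\<in>{1..n}. q k) E D"
proof -
  define E where "E x = concat (map x [1..<n+1])" for x :: "nat \<Rightarrow> bool list"
  define D where "D i c (s :: bool list) j = take (q j) (drop (sum_list (map q [1..<j])) c)"
    for i :: nat and c :: "bool list" and s j
  have "is_index_code n q A (\<Sum>k\<in>{1..n}. q k) E D"
    unfolding is_index_code_def
  proof (intro conjI ballI allI impI)
    fix x assume x: "x \<in> msgs n q"
    have mm: "map length (map x [1..<n+1]) = map q [1..<n+1]"
      using x unfolding msgs_def by auto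
    have "length (E x) = sum_list (map q [1..<n+1])"
      unfolding E_def length_concat mm ..
    also have "\<dots> = (\<Sum>k\<in>{1..n}. q k)"
      by (metis sum_set_upt_conv_sum_list_nat set_upt atLeastLessThanSuc_atLeastAtMost Suc_eq_plus1)
    finally show "length (E x) = (\<Sum>k\<in>{1..n}. q k)" .
  next
    fix x i j assume x: "x \<in> msgs n q" and i: "i \<in> {1..n}" and ji: "(j, i) \<in> A"
    show "D i (E x) (x i) j = x j"
    proof (cases "j \<in> {1..n}")
      case True
      have len: "\<forall>k\<in>set [1..<n+1]. length (x k) = q k" using x unfolding msgs_def by auto
      have p: "j - 1 < length [1..<n+1]" using True by auto
      have jj: "[1..<n+1] ! (j - 1) = j" using True by (subst nth_upt) auto
      have tk: "take (j - 1) [1..<n+1] = [1..<j]" using True by (simp add: take_upt)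
      show ?thesis using concat_extract[OF len p] unfolding jj tk D_def E_def .
    next
      case False
      then show ?thesis using ji Asub by auto
    qed
  qed
  then show ?thesis by blast
qed



lemma reach_in:
  assumes "A \<subseteq> {1..n} \<times> {1..n}" "(u, v) \<in> A\<^sup>*" "u \<in> {1..n}"
  shows "v \<in> {1..n}"
  using assms(2,3) by (induction rule: rtrancl_induct) (use assms(1) in auto)

lemma path_inside:
  assumes "(a, b) \<in> A\<^sup>*" "a \<in> S" "\<And>s t. s \<in> S \<Longrightarrow> (s, t) \<in> A \<Longrightarrow> t \<in> S"
  shows "(a, b) \<in> (A \<inter> S \<times> S)\<^sup>*"
proof -
  have "(a, b) \<in> (A \<inter> S \<times> S)\<^sup>* \<and> b \<in> S" using assms(1)
  proof (induction rule: rtrancl_induct)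
    case base then show ?case using assms(2) by simp
  next
    case (step y z)
    then have "z \<in> S" using assms(3) by blast
    then show ?case using step by (meson IntI mem_Sigma_iff rtrancl.rtrancl_into_rtrancl)
  qed
  then show ?thesis by blast
qed

lemma roots_exist:
  assumes Asub: "A \<subseteq> {1..n} \<times> {1..n}" and noloop: "\<forall>i. (i, i) \<notin> A"
    and u: "u \<in> {1..n}"
  shows "(\<exists>w \<in> leaf_vertices n A. (u, w) \<in> A\<^sup>*) \<or>
         (\<exists>S. is_leaf_scc n A S \<and> (\<forall>v\<in>S. (u, v) \<in> A\<^sup>*))"
proof -
  define reach where "reach w = {v. (w, v) \<in> A\<^sup>*}" for w
  have reach_sub: "reach w \<subseteq> {1..n}" if "w \<in> {1..n}" for w
    using reach_in[OF Asub _ that] unfolding reach_def by blast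
  obtain w where w: "w \<in> reach u" and wmin: "\<forall>v. v \<in> reach u \<longrightarrow> card (reach w) \<le> card (reach v)"
  proof -
    have "u \<in> reach u" unfolding reach_def by simp
    then have "\<exists>x. x \<in> reach u \<and> (\<forall>y. y \<in> reach u \<longrightarrow> card (reach x) \<le> card (reach y))"
      by (rule ex_has_least_nat)
    then obtain x where "x \<in> reach u" "\<forall>y. y \<in> reach u \<longrightarrow> card (reach x) \<le> card (reach y)"
      by (elim exE conjE)
    then show ?thesis by (rule that)
  qed
  have wn: "w \<in> {1..n}" using reach_sub[OF u] w by blast
  have finw: "finite (reach w)" using reach_sub[OF wn] finite_subset by blast
  have same: "reach v = reach w" if v: "v \<in> reach w" for v
  proof -
    have sub: "reach v \<subseteq> reach w"
    proof
      fix z assume "z \<in> reach v"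
      then have "(v, z) \<in> A\<^sup>*" unfolding reach_def by simp
      moreover have "(w, v) \<in> A\<^sup>*" using v unfolding reach_def by simp
      ultimately show "z \<in> reach w" unfolding reach_def by (simp add: rtrancl_trans[of w v A z])
    qed
    have "(w, v) \<in> A\<^sup>*" "(u, w) \<in> A\<^sup>*" using v w unfolding reach_def by simp_all
    then have "v \<in> reach u" unfolding reach_def by (simp add: rtrancl_trans[of u w A v])
    then have "card (reach w) \<le> card (reach v)" using wmin by blast
    then have "card (reach v) = card (reach w)" using card_mono[OF finw sub] by linarith
    then show ?thesis by (rule card_subset_eq[OF finw sub])
  qed
  have wS: "w \<in> reach w" unfolding reach_def by simp
  have closed: "t \<in> reach w" if "s \<in> reach w" "(s, t) \<in> A" for s t
    using that unfolding reach_def by (simp add: rtrancl.rtrancl_into_rtrancl[of w s A t])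
  show ?thesis
  proof (cases "card (reach w) \<ge> 2")
    case False
    then have "card (reach w) \<le> Suc 0" by simp
    then have "\<forall>a\<in>reach w. \<forall>b\<in>reach w. a = b" using card_le_Suc0_iff_eq[OF finw] by blast
    then have "reach w = {w}" using wS by blast
    then have "\<not> (\<exists>j. (w, j) \<in> A)"
    proof -
      assume rw: "reach w = {w}"
      show ?thesis
      proof
        assume "\<exists>j. (w, j) \<in> A"
        then obtain j where j: "(w, j) \<in> A" by (elim exE)
        then have "j \<in> reach w" using closed[OF wS] by simp
        then have "j = w" using rw by simp
        then show False using noloop j by simp
      qed
    qed
    then have "w \<in> leaf_vertices n A" using wn unfolding leaf_vertices_def by auto
    then show ?thesis using w unfolding reach_def by blast
  next
    case True
    have sc: "strongly_connected_in A (reach w)"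
      unfolding strongly_connected_in_def
    proof (intro ballI)
      fix a b assume a: "a \<in> reach w" and b: "b \<in> reach w"
      have "(a, b) \<in> A\<^sup>*" using b same[OF a] unfolding reach_def by auto
      then show "(a, b) \<in> (A \<inter> reach w \<times> reach w)\<^sup>*"
        using path_inside[of a b A "reach w"] a closed by blast
    qed
    have maxl: "\<not> strongly_connected_in A T" if T: "reach w \<subset> T" "T \<subseteq> {1..n}" for T
    proof
      assume "strongly_connected_in A T"
      obtain t where t: "t \<in> T" "t \<notin> reach w" using T by blast
      have "w \<in> T" using T wS by blast
      then have "(w, t) \<in> (A \<inter> T \<times> T)\<^sup>*" using \<open>strongly_connected_in A T\<close> t
        unfolding strongly_connected_in_def by blast
      then have "(w, t) \<in> A\<^sup>*" using rtrancl_mono[of "A \<inter> T \<times> T" A] by blast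
      then show False using t unfolding reach_def by simp
    qed
    have ne: "reach w \<noteq> {}" using wS by blast
    have "is_scc n A (reach w)"
      unfolding is_scc_def
    proof (intro conjI allI impI)
      show "reach w \<noteq> {}" by (rule ne)
      show "reach w \<subseteq> {1..n}" by (rule reach_sub[OF wn])
      show "strongly_connected_in A (reach w)" by (rule sc)
      fix T assume "reach w \<subset> T \<and> T \<subseteq> {1..n}"
      then show "\<not> strongly_connected_in A T" using maxl by simp
    qed
    then have "is_leaf_scc n A (reach w)"
      unfolding is_leaf_scc_def
    proof (intro conjI allI impI)
      show "2 \<le> card (reach w)" by (rule True)
      fix a b assume "a \<in> reach w \<and> (a, b) \<in> A"
      then show "b \<in> reach w" using closed by blast
    qed
    moreover have "\<forall>v\<in>reach w. (u, v) \<in> A\<^sup>*" using w unfolding reach_def by auto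
    ultimately show ?thesis by (intro disjI2 exI[of _ "reach w"]) simp
  qed
qed

theorem theorem1:
  fixes n :: nat and q :: "nat \<Rightarrow> nat" and A :: "(nat \<times> nat) set"
  assumes "A \<subseteq> {1..n} \<times> {1..n}"
    and "\<forall>i. (i, i) \<notin> A"
    and "\<forall>i \<in> {1..n}. q i \<ge> 1"
  shows "int (opt_len n q A) \<ge>
           (\<Sum>k \<in> {1..n}. int (q k)) - (\<Sum>i \<in> leaf_vertices n A. int (q i))
           - (\<Sum>S \<in> {S. is_leaf_scc n A S}. int (Min (q ` S)))"
proof -
  define LS where "LS = {S. is_leaf_scc n A S}"
  define m where "m S = (SOME v. v \<in> S \<and> q v = Min (q ` S))" for S
  have LSsub: "LS \<subseteq> Pow {1..n}" unfolding LS_def is_leaf_scc_def is_scc_def by auto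
  have finLS: "finite LS" using LSsub finite_subset by blast
  have mS: "m S \<in> S \<and> q (m S) = Min (q ` S)" if "S \<in> LS" for S
  proof -
    have ne: "S \<noteq> {}" and fin: "finite S"
      using that LSsub finite_subset unfolding LS_def is_leaf_scc_def is_scc_def by auto
    have "Min (q ` S) \<in> q ` S" using ne fin by simp
    then have "\<exists>v. v \<in> S \<and> q v = Min (q ` S)" by force
    then show ?thesis unfolding m_def by (rule someI_ex)
  qed
  define R where "R = leaf_vertices n A \<union> m ` LS"
  have Rsub: "R \<subseteq> {1..n}"
    using mS LSsub unfolding R_def leaf_vertices_def by blast
  have roots: "\<forall>u\<in>{1..n}. \<exists>r\<in>R. (u, r) \<in> A\<^sup>*"
  proof
    fix u assume u: "u \<in> {1..n}"
    from roots_exist[OF assms(1,2) u] show "\<exists>r\<in>R. (u, r) \<in> A\<^sup>*"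
    proof
      assume "\<exists>w \<in> leaf_vertices n A. (u, w) \<in> A\<^sup>*"
      then show ?thesis unfolding R_def by blast
    next
      assume "\<exists>S. is_leaf_scc n A S \<and> (\<forall>v\<in>S. (u, v) \<in> A\<^sup>*)"
      then obtain S where "S \<in> LS" "\<forall>v\<in>S. (u, v) \<in> A\<^sup>*" unfolding LS_def by blast
      then show ?thesis using mS unfolding R_def by blast
    qed
  qed
  define L where "L = opt_len n q A"
  have ex: "\<exists>E D. is_index_code n q A L E D"
    unfolding L_def opt_len_def by (rule LeastI_ex) (use code_exists[OF assms(1)] in blast)
  then obtain E D where code: "is_index_code n q A L E D" by blast
  have b1: "(\<Sum>k\<in>{1..n}. q k) \<le> L + (\<Sum>r\<in>R. q r)" by (rule code_bound[OF code assms(1) Rsub roots])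
  have finLV: "finite (leaf_vertices n A)" unfolding leaf_vertices_def by simp
  have "(\<Sum>r\<in>R. q r) \<le> (\<Sum>r\<in>leaf_vertices n A. q r) + (\<Sum>r\<in>m ` LS. q r)"
    unfolding R_def using sum_Un_nat[OF finLV finite_imageI[OF finLS, of m], of q] by linarith
  also have "(\<Sum>r\<in>m ` LS. q r) \<le> (\<Sum>S\<in>LS. q (m S))"
    using sum_image_le[OF finLS, of q m] by (simp add: comp_def)
  also have "(\<Sum>S\<in>LS. q (m S)) = (\<Sum>S\<in>LS. Min (q ` S))"
    using mS by (intro sum.cong) auto
  finally have b2: "(\<Sum>r\<in>R. q r) \<le> (\<Sum>r\<in>leaf_vertices n A. q r) + (\<Sum>S\<in>LS. Min (q ` S))"
    by simp
  have "(\<Sum>k\<in>{1..n}. q k) \<le> L + (\<Sum>r\<in>leaf_vertices n A. q r) + (\<Sum>S\<in>LS. Min (q ` S))"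
    using b1 b2 by linarith
  then have "int (\<Sum>k\<in>{1..n}. q k) \<le> int L + int (\<Sum>r\<in>leaf_vertices n A. q r) + int (\<Sum>S\<in>LS. Min (q ` S))"
    by linarith
  then show ?thesis unfolding L_def LS_def by (simp add: of_nat_sum)
qed

end
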